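(* Let $\mathcal G$ be a simple hypergraph with vertex set $[n]$. If all coefficients of the formal power series $I(\mathcal G,-x)^{-1}\in\mathbb Q[[x_1,\dots,x_n]]$ are nonnegative, then every edge of $\mathcal G$ has even cardinality.
   Context: A hypergraph $\mathcal G$ on $[n]$ is simple if every edge has at least two elements and no edge properly contains another. $I(\mathcal G,x)=\sum_I\prod_{v\in I}x_v$, summed over all independent subsets $I\subseteq[n]$ (those containing no edge), including $\emptyset$. $I(\mathcal G,-x)$ is obtained by substituting $x_i\mapsto-x_i$ for all $i$; it has constant term $1$, so its inverse exists in $\mathbb Q[[x_1,\dots,x_n]]$. *)

theory Defs
  imports Complex_Main "HOL-Library.Multiset"
begin

definition simple_hypergraph :: "nat \<Rightarrow> nat set set \<Rightarrow> bool" where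
  "simple_hypergraph n E \<longleftrightarrow>
     (\<forall>e\<in>E. e \<subseteq> {1..n} \<and> card e \<ge> 2) \<and>
     (\<forall>e\<in>E. \<forall>e'\<in>E. \<not> e \<subset> e')"

definition independent :: "nat set set \<Rightarrow> nat set \<Rightarrow> bool" where
  "independent E I \<longleftrightarrow> (\<forall>e\<in>E. \<not> e \<subseteq> I)"

text \<open>Formal power series in x_1..x_n over Q: coefficient functions on monomials,
  a monomial being a multiset of variable indices (exponent of x_i = count m i).\<close>

type_synonym mps = "nat multiset \<Rightarrow> rat"

definition monomial_on :: "nat \<Rightarrow> nat multiset \<Rightarrow> bool" where
  "monomial_on n m \<longleftrightarrow> set_mset m \<subseteq> {1..n}"

definition series_on :: "nat \<Rightarrow> mps \<Rightarrow> bool" where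
  "series_on n f \<longleftrightarrow> (\<forall>m. \<not> monomial_on n m \<longrightarrow> f m = 0)"

definition ps_mult :: "mps \<Rightarrow> mps \<Rightarrow> mps" where
  "ps_mult f g m = (\<Sum>a\<in>{a. a \<subseteq># m}. f a * g (m - a))"

definition ps_one :: mps where
  "ps_one m = (if m = {#} then 1 else 0)"

definition indep_poly_neg :: "nat \<Rightarrow> nat set set \<Rightarrow> mps" where
  "indep_poly_neg n E m =
     (if \<exists>I. I \<subseteq> {1..n} \<and> independent E I \<and> m = mset_set I
      then (-1) ^ size m else 0)"

definition is_ps_inverse :: "nat \<Rightarrow> mps \<Rightarrow> mps \<Rightarrow> bool" where
  "is_ps_inverse n f S \<longleftrightarrow> series_on n S \<and>
     (\<forall>m. monomial_on n m \<longrightarrow> ps_mult f S m = ps_one m)"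

end

theory Submission imports Defs begin

lemma mset_set_sub: "A \<subseteq> set_mset m \<Longrightarrow> mset_set A \<subseteq># m"
  by (meson finite_set_mset mset_set_set_mset_msubset subset_imp_msubset_mset_set subset_mset.order_trans)

lemma finite_submsets: "finite {a. a \<subseteq># (m::'a multiset)}"
proof (rule finite_subset)
  show "{a. a \<subseteq># m} \<subseteq> (\<Union>k\<in>{0..size m}. multisets_of_size (set_mset m) k)"
    by (auto simp: multisets_of_size_def dest: mset_subset_eqD size_mset_mono)
  show "finite (\<Union>k\<in>{0..size m}. multisets_of_size (set_mset m) k)" by auto
qed

lemma alt_sum_Pow:
  assumes "finite B" "B \<noteq> {}"
  shows "(\<Sum>A\<in>Pow B. (-1::rat) ^ card A) = 0"
proof -
  have "card {T. T \<subseteq> B \<and> {} \<subseteq> T \<and> even(card T)} = card {T. T \<subseteq> B \<and> {} \<subseteq> T \<and> odd(card T)}"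
    using card_subsupersets_even_odd[of B "{}"] assms by blast
  then have "card {T. T \<in> Pow B \<and> even(card T)} = card {T. T \<in> Pow B \<and> odd(card T)}" by simp
  then show ?thesis using sum_alternating_cancels[of "Pow B" card] assms by simp
qed

lemma recur:
  assumes simple: "simple_hypergraph n E" and inv: "is_ps_inverse n (indep_poly_neg n E) S"
    and eE: "e \<in> E" and sub: "set_mset m \<subseteq> e"
  shows "(\<Sum>A\<in>Pow (set_mset m) - {e}. (-1)^card A * S (m - mset_set A)) = ps_one m"
proof -
  let ?f = "indep_poly_neg n E"
  let ?P = "Pow (set_mset m) - {e}"
  have en: "e \<subseteq> {1..n}" using simple eE unfolding simple_hypergraph_def by blast
  have mon: "monomial_on n m" using sub en unfolding monomial_on_def by blast
  have "ps_one m = ps_mult ?f S m" using inv mon unfolding is_ps_inverse_def by simp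
  also have "\<dots> = (\<Sum>a\<in>{a. a \<subseteq># m}. ?f a * S (m - a))" unfolding ps_mult_def by simp
  also have "\<dots> = (\<Sum>a\<in>mset_set ` ?P. ?f a * S (m - a))"
  proof (rule sum.mono_neutral_right[OF finite_submsets])
    show "mset_set ` ?P \<subseteq> {a. a \<subseteq># m}"
      by (auto simp: mset_set_sub)
    show "\<forall>a\<in>{a. a \<subseteq># m} - mset_set ` ?P. ?f a * S (m - a) = 0"
    proof
      fix a assume a: "a \<in> {a. a \<subseteq># m} - mset_set ` ?P"
      show "?f a * S (m - a) = 0"
      proof (cases "?f a = 0")
        case False
        then obtain I where I: "I \<subseteq> {1..n}" "independent E I" "a = mset_set I"
          unfolding indep_poly_neg_def by (auto split: if_splits)
        have fI: "finite I" using I(1) finite_subset by blast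
        have "I \<subseteq> set_mset m" using a I fI by (auto dest: mset_subset_eqD)
        moreover have "I \<noteq> e" using I(2) eE unfolding independent_def by blast
        ultimately have "a \<in> mset_set ` ?P" using I by auto
        then show ?thesis using a by blast
      qed simp
    qed
  qed
  also have "\<dots> = (\<Sum>A\<in>?P. ?f (mset_set A) * S (m - mset_set A))"
  proof (rule sum.reindex[unfolded comp_def])
    show "inj_on mset_set ?P"
    proof (rule inj_onI)
      fix x y assume "x \<in> ?P" "y \<in> ?P" "mset_set x = mset_set y"
      moreover have "finite x" "finite y" using calculation finite_subset by blast+
      ultimately show "x = y" by simp
    qed
  qed
  also have "\<dots> = (\<Sum>A\<in>?P. (-1)^card A * S (m - mset_set A))"
  proof (rule sum.cong[OF refl])
    fix A assume A: "A \<in> ?P"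
    have fA: "finite A" using A finite_subset by blast
    have Ae: "A \<subset> e" using A sub by blast
    have "independent E A" unfolding independent_def
    proof
      fix e' assume "e' \<in> E"
      show "\<not> e' \<subseteq> A"
      proof
        assume "e' \<subseteq> A"
        then have "e' \<subset> e" using Ae by blast
        then show False using simple \<open>e' \<in> E\<close> eE unfolding simple_hypergraph_def by blast
      qed
    qed
    moreover have "A \<subseteq> {1..n}" using Ae en by blast
    ultimately have "?f (mset_set A) = (-1) ^ size (mset_set A)"
      unfolding indep_poly_neg_def by auto
    then show "?f (mset_set A) * S (m - mset_set A) = (-1)^card A * S (m - mset_set A)" by simp
  qed
  finally show ?thesis by simp
qed

lemma S_one:
  assumes simple: "simple_hypergraph n E" and inv: "is_ps_inverse n (indep_poly_neg n E) S"
    and eE: "e \<in> E"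
  shows "set_mset m \<subset> e \<Longrightarrow> S m = 1"
proof (induction "size m" arbitrary: m rule: less_induct)
  case less
  have fe: "finite e" using simple eE unfolding simple_hypergraph_def
    by (metis card.infinite not_numeral_le_zero)
  let ?B = "set_mset m"
  have fB: "finite ?B" by simp
  have "Pow ?B - {e} = Pow ?B" using less.prems by blast
  then have R: "(\<Sum>A\<in>Pow ?B. (-1)^card A * S (m - mset_set A)) = ps_one m"
    using recur[OF simple inv eE, of m] less.prems by simp
  show ?case
  proof (cases "m = {#}")
    case True
    then show ?thesis using R by (simp add: ps_one_def)
  next
    case False
    have rest: "(\<Sum>A\<in>Pow ?B - {{}}. (-1)^card A * S (m - mset_set A)) = (\<Sum>A\<in>Pow ?B - {{}}. (-1::rat)^card A)"
    proof (rule sum.cong[OF refl])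
      fix A assume A: "A \<in> Pow ?B - {{}}"
      have fA: "finite A" using A finite_subset fB by blast
      have sub: "mset_set A \<subseteq># m" using A by (auto simp: mset_set_sub)
      have "size (m - mset_set A) < size m"
        using sub A fA by (simp add: size_Diff_submset) (metis card_gt_0_iff diff_less size_mset_mono size_mset_set less_le_trans)
      moreover have "set_mset (m - mset_set A) \<subset> e"
        using less.prems by (meson in_diffD psubset_subset_trans subsetI subset_psubset_trans)
      ultimately have "S (m - mset_set A) = 1" using less.hyps by blast
      then show "(-1)^card A * S (m - mset_set A) = (-1::rat)^card A" by simp
    qed
    have "(\<Sum>A\<in>Pow ?B. (-1::rat)^card A) = 1 + (\<Sum>A\<in>Pow ?B - {{}}. (-1::rat)^card A)"
      using sum.remove[of "Pow ?B" "{}" "\<lambda>A. (-1::rat)^card A"] by simp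
    then have z: "(\<Sum>A\<in>Pow ?B - {{}}. (-1::rat)^card A) = -1"
      using alt_sum_Pow[of ?B] False by simp
    have "(\<Sum>A\<in>Pow ?B. (-1)^card A * S (m - mset_set A)) = S m + (\<Sum>A\<in>Pow ?B - {{}}. (-1)^card A * S (m - mset_set A))"
      using sum.remove[of "Pow ?B" "{}" "\<lambda>A. (-1)^card A * S (m - mset_set A)"] by simp
    then show ?thesis using R rest z False by (simp add: ps_one_def)
  qed
qed

theorem proposition8p1:
  fixes n :: nat and E :: "nat set set" and S :: "nat multiset \<Rightarrow> rat"
  assumes "simple_hypergraph n E"
    and "is_ps_inverse n (indep_poly_neg n E) S"
    and "\<forall>m. S m \<ge> 0"
  shows "\<forall>e\<in>E. even (card e)"
proof (rule ballI, rule ccontr)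
  fix e assume eE: "e \<in> E" and odd: "\<not> even (card e)"
  note simple = assms(1) and inv = assms(2)
  have c2: "card e \<ge> 2" using simple eE unfolding simple_hypergraph_def by blast
  then have fe: "finite e" by (metis card.infinite not_numeral_le_zero)
  have ne: "e \<noteq> {}" using c2 by auto
  then obtain i where ie: "i \<in> e" by blast
  have ei: "e \<noteq> {i}" using c2 by auto
  have pw: "(-1::rat)^card e = -1" using odd by simp
  have one: "\<And>m. set_mset m \<subset> e \<Longrightarrow> S m = 1" using S_one[OF simple inv eE] by blast
  let ?me = "mset_set e"
  have alt: "(\<Sum>A\<in>Pow e. (-1::rat)^card A) = 0" using alt_sum_Pow[OF fe ne] .
  have Pe: "finite (Pow e)" using fe by simp
  have Se: "S ?me = 0"
  proof -
    have R: "(\<Sum>A\<in>Pow e - {e}. (-1)^card A * S (?me - mset_set A)) = 0"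
      using recur[OF simple inv eE, of ?me] fe ne by (simp add: ps_one_def mset_set_empty_iff)
    have rest: "(\<Sum>A\<in>Pow e - {e} - {{}}. (-1)^card A * S (?me - mset_set A)) = (\<Sum>A\<in>Pow e - {e} - {{}}. (-1::rat)^card A)"
    proof (rule sum.cong[OF refl])
      fix A assume A: "A \<in> Pow e - {e} - {{}}"
      have "?me - mset_set A = mset_set (e - A)" using A fe by (simp add: mset_set_Diff)
      moreover have "set_mset (mset_set (e - A)) \<subset> e" using A fe by auto
      ultimately show "(-1)^card A * S (?me - mset_set A) = (-1::rat)^card A" using one by simp
    qed
    have "(\<Sum>A\<in>Pow e. (-1::rat)^card A) = (-1)^card e + (\<Sum>A\<in>Pow e - {e}. (-1::rat)^card A)"
      using sum.remove[OF Pe, of e "\<lambda>A. (-1::rat)^card A"] by simp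
    also have "(\<Sum>A\<in>Pow e - {e}. (-1::rat)^card A) = 1 + (\<Sum>A\<in>Pow e - {e} - {{}}. (-1::rat)^card A)"
      using sum.remove[of "Pow e - {e}" "{}" "\<lambda>A. (-1::rat)^card A"] fe ne by simp
    finally have z: "(\<Sum>A\<in>Pow e - {e} - {{}}. (-1::rat)^card A) = 0" using alt pw by simp
    have "(\<Sum>A\<in>Pow e - {e}. (-1)^card A * S (?me - mset_set A)) = S ?me + (\<Sum>A\<in>Pow e - {e} - {{}}. (-1)^card A * S (?me - mset_set A))"
      using sum.remove[of "Pow e - {e}" "{}" "\<lambda>A. (-1)^card A * S (?me - mset_set A)"] fe ne by simp
    then show ?thesis using R rest z by simp
  qed
  let ?m = "?me + {#i#}"
  have sm: "set_mset ?m = e" using fe ie by auto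
  have R: "(\<Sum>A\<in>Pow e - {e}. (-1)^card A * S (?m - mset_set A)) = 0"
    using recur[OF simple inv eE, of ?m] sm by (simp add: ps_one_def del: set_mset_add_mset_insert)
  let ?Q = "Pow e - {e} - {{}} - {{i}}"
  have rest: "(\<Sum>A\<in>?Q. (-1)^card A * S (?m - mset_set A)) = (\<Sum>A\<in>?Q. (-1::rat)^card A)"
  proof (rule sum.cong[OF refl])
    fix A assume A: "A \<in> ?Q"
    then obtain j where j: "j \<in> A" "j \<noteq> i" by blast
    have fA: "finite A" using A fe finite_subset by blast
    have "count (?m - mset_set A) j = 0" using j fA fe A by (auto simp: count_mset_set')
    then have "j \<notin> set_mset (?m - mset_set A)" by (metis count_eq_zero_iff)
    moreover have "set_mset (?m - mset_set A) \<subseteq> e" using sm by (metis in_diffD subsetI)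
    moreover have "j \<in> e" using A j by blast
    ultimately have "set_mset (?m - mset_set A) \<subset> e" by blast
    then show "(-1)^card A * S (?m - mset_set A) = (-1::rat)^card A" using one by simp
  qed
  have "(\<Sum>A\<in>Pow e. (-1::rat)^card A) = (-1)^card e + (\<Sum>A\<in>Pow e - {e}. (-1::rat)^card A)"
    using sum.remove[OF Pe, of e "\<lambda>A. (-1::rat)^card A"] by simp
  also have "(\<Sum>A\<in>Pow e - {e}. (-1::rat)^card A) = 1 + (\<Sum>A\<in>Pow e - {e} - {{}}. (-1::rat)^card A)"
    using sum.remove[of "Pow e - {e}" "{}" "\<lambda>A. (-1::rat)^card A"] fe ne by simp
  also have "(\<Sum>A\<in>Pow e - {e} - {{}}. (-1::rat)^card A) = -1 + (\<Sum>A\<in>?Q. (-1::rat)^card A)"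
    using sum.remove[of "Pow e - {e} - {{}}" "{i}" "\<lambda>A. (-1::rat)^card A"] fe ie ei by simp
  finally have z: "(\<Sum>A\<in>?Q. (-1::rat)^card A) = 1" using alt pw by simp
  have "(\<Sum>A\<in>Pow e - {e}. (-1)^card A * S (?m - mset_set A)) = S ?m + (\<Sum>A\<in>Pow e - {e} - {{}}. (-1)^card A * S (?m - mset_set A))"
    using sum.remove[of "Pow e - {e}" "{}" "\<lambda>A. (-1)^card A * S (?m - mset_set A)"] fe ne by simp
  also have "(\<Sum>A\<in>Pow e - {e} - {{}}. (-1)^card A * S (?m - mset_set A)) = - S (?m - mset_set {i}) + (\<Sum>A\<in>?Q. (-1)^card A * S (?m - mset_set A))"
    using sum.remove[of "Pow e - {e} - {{}}" "{i}" "\<lambda>A. (-1)^card A * S (?m - mset_set A)"] fe ie ei by simp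
  finally have "S ?m = -1" using R rest z Se by simp
  then show False using assms(3) by (metis neg_0_le_iff_le not_one_le_zero)
qed

end
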